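(* For all primes $p$, all integers $m,k$ and all integers $r\ge1$, $$\binom{p^rm-1}{k}(-1)^k\equiv\binom{p^{r-1}m-1}{\lfloor k/p\rfloor}(-1)^{\lfloor k/p\rfloor}\pmod{p^r}.$$
   Context: For all integers $n, k$, the binomial coefficient is defined by $\binom{n}{k} = \lim_{z \to 0} \frac{\Gamma(z+n+1)}{\Gamma(z+k+1)\Gamma(z+n-k+1)}$; this is a finite integer for all $n,k\in\mathbb{Z}$, agrees with the usual one for $n\ge0$, and satisfies $\binom{n}{k}=\binom{n}{n-k}$. $\lfloor x\rfloor$ denotes the floor function. *)

theory Defs
  imports "HOL-Analysis.Analysis"
begin

definition gbinom :: "int \<Rightarrow> int \<Rightarrow> real" where
  "gbinom n k = Lim (at (0::real))
     (\<lambda>z. Gamma (z + of_int n + 1) / (Gamma (z + of_int k + 1) * Gamma (z + of_int n - of_int k + 1)))"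

end

theory Submission
  imports Defs "HOL-Computational_Algebra.Primes"
begin


lemma ev_nonint: "\<forall>\<^sub>F z in at (0::real). \<forall>j::int. z + of_int j \<notin> \<int>\<^sub>\<le>\<^sub>0"
proof -
  have "\<forall>\<^sub>F z in at (0::real). z \<in> ball 0 1 - {0}"
    by (intro eventually_at_in_open) auto
  then show ?thesis
  proof (rule eventually_mono)
    fix z :: real assume z: "z \<in> ball 0 1 - {0}"
    show "\<forall>j::int. z + of_int j \<notin> \<int>\<^sub>\<le>\<^sub>0"
    proof (intro allI notI)
      fix j :: int assume "z + of_int j \<in> \<int>\<^sub>\<le>\<^sub>0"
      then obtain i :: int where "z + of_int j = of_int i" by (auto elim!: nonpos_Ints_cases)
      then have "z = of_int (i - j)" by simp
      with z have "\<bar>real_of_int (i - j)\<bar> < 1" "i - j \<noteq> 0" by (auto simp: dist_real_def)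
      then have "\<bar>i - j\<bar> < 1" "i - j \<noteq> 0" by linarith+
      then show False by linarith
    qed
  qed
qed

lemma limA:
  fixes n :: int and k :: nat
  shows "((\<lambda>z::real. Gamma (z + of_int n + 1) / (Gamma (z + of_int (int k) + 1) * Gamma (z + of_int n - of_int (int k) + 1)))
     \<longlongrightarrow> (of_int n gchoose k)) (at 0)"
proof -
  have ev: "\<forall>\<^sub>F z in at (0::real). Gamma (z + of_int n + 1) / (Gamma (z + of_int (int k) + 1) * Gamma (z + of_int n - of_int (int k) + 1))
      = pochhammer (z + of_int n - of_nat k + 1) k / Gamma (z + of_nat k + 1)"
    using ev_nonint
  proof (rule eventually_mono)
    fix z :: real assume h: "\<forall>j::int. z + of_int j \<notin> \<int>\<^sub>\<le>\<^sub>0"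
    have e: "z + of_int n - of_nat k + 1 = z + of_int (n - int k + 1)" by simp
    have w: "z + of_int n - of_nat k + 1 \<notin> \<int>\<^sub>\<le>\<^sub>0" unfolding e by (rule h[rule_format])
    have e2: "z + of_nat k + 1 = z + of_int (int k + 1)" by simp
    have "z + of_nat k + 1 \<notin> \<int>\<^sub>\<le>\<^sub>0" unfolding e2 by (rule h[rule_format])
    then have g2: "Gamma (z + of_nat k + 1) \<noteq> 0" by (simp add: Gamma_eq_zero_iff)
    have g1: "Gamma (z + of_int n - of_nat k + 1) \<noteq> 0" using w by (simp add: Gamma_eq_zero_iff)
    have "pochhammer (z + of_int n - of_nat k + 1) k = Gamma (z + of_int n - of_nat k + 1 + of_nat k) / Gamma (z + of_int n - of_nat k + 1)"
      using pochhammer_Gamma[OF w] .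
    also have "z + of_int n - of_nat k + 1 + of_nat k = z + of_int n + 1" by simp
    finally show "Gamma (z + of_int n + 1) / (Gamma (z + of_int (int k) + 1) * Gamma (z + of_int n - of_int (int k) + 1))
      = pochhammer (z + of_int n - of_nat k + 1) k / Gamma (z + of_nat k + 1)"
      using g1 g2 by (simp add: field_simps)
  qed
  have "((\<lambda>z::real. pochhammer (z + of_int n - of_nat k + 1) k / Gamma (z + of_nat k + 1))
      \<longlongrightarrow> pochhammer (0 + of_int n - of_nat k + 1) k / Gamma (0 + of_nat k + 1)) (at 0)"
  proof (rule tendsto_divide)
    show "((\<lambda>z. pochhammer (z + of_int n - of_nat k + 1) k) \<longlongrightarrow> pochhammer (0 + of_int n - of_nat k + 1) k) (at (0::real))"
      by (intro isCont_tendsto_compose[where g="\<lambda>z. pochhammer z k"] isCont_pochhammer) (auto intro!: tendsto_eq_intros)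
    have "isCont Gamma (0 + of_nat k + 1 :: real)"
      by (intro isCont_Gamma) (auto simp: nonpos_Ints_def)
    moreover have "((\<lambda>z. z + of_nat k + 1) \<longlongrightarrow> 0 + of_nat k + 1) (at (0::real))"
      by (intro tendsto_intros)
    ultimately show "((\<lambda>z. Gamma (z + of_nat k + 1)) \<longlongrightarrow> Gamma (0 + of_nat k + 1)) (at (0::real))"
      by (rule isCont_tendsto_compose)
    show "Gamma (0 + of_nat k + 1) \<noteq> (0::real)" by (auto simp: Gamma_eq_zero_iff nonpos_Ints_def)
  qed
  also have "pochhammer (0 + of_int n - of_nat k + 1) k / Gamma (0 + of_nat k + 1) = (of_int n gchoose k :: real)"
    using Gamma_fact[of k, where 'a=real] by (simp add: gbinomial_pochhammer' add.commute)
  finally show ?thesis using tendsto_cong[OF ev] by simp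
qed

lemma limZ:
  fixes n k :: int
  assumes "k < 0" "n - k < 0"
  shows "((\<lambda>z::real. Gamma (z + of_int n + 1) / (Gamma (z + of_int k + 1) * Gamma (z + of_int n - of_int k + 1)))
     \<longlongrightarrow> 0) (at 0)"
proof -
  define j where "j = nat (- k)"
  have kj: "k = - int j" using assms unfolding j_def by simp
  have ev: "\<forall>\<^sub>F z in at (0::real). Gamma (z + of_int n + 1) / (Gamma (z + of_int k + 1) * Gamma (z + of_int n - of_int k + 1))
      = rGamma (z + of_int k + 1) / pochhammer (z + of_int n + 1) j"
    using ev_nonint
  proof (rule eventually_mono)
    fix z :: real assume h: "\<forall>j::int. z + of_int j \<notin> \<int>\<^sub>\<le>\<^sub>0"
    have e: "z + of_int n + 1 = z + of_int (n + 1)" by simp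
    have w: "z + of_int n + 1 \<notin> \<int>\<^sub>\<le>\<^sub>0" unfolding e by (rule h[rule_format])
    have g1: "Gamma (z + of_int n + 1) \<noteq> 0" using w by (simp add: Gamma_eq_zero_iff)
    have "pochhammer (z + of_int n + 1) j = Gamma (z + of_int n + 1 + of_nat j) / Gamma (z + of_int n + 1)"
      using pochhammer_Gamma[OF w] .
    also have "z + of_int n + 1 + of_nat j = z + of_int n - of_int k + 1" by (simp add: kj)
    finally have "Gamma (z + of_int n - of_int k + 1) = pochhammer (z + of_int n + 1) j * Gamma (z + of_int n + 1)"
      using g1 by (simp add: field_simps)
    then show "Gamma (z + of_int n + 1) / (Gamma (z + of_int k + 1) * Gamma (z + of_int n - of_int k + 1))
      = rGamma (z + of_int k + 1) / pochhammer (z + of_int n + 1) j"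
      using g1 by (simp add: rGamma_inverse_Gamma field_simps)
  qed
  have "((\<lambda>z::real. rGamma (z + of_int k + 1) / pochhammer (z + of_int n + 1) j)
      \<longlongrightarrow> rGamma (0 + of_int k + 1) / pochhammer (0 + of_int n + 1) j) (at 0)"
  proof (rule tendsto_divide)
    have "pochhammer (of_int (n + 1) :: real) j \<noteq> 0"
    proof
      assume "pochhammer (of_int (n + 1) :: real) j = 0"
      then obtain i where "i < j" "(of_int (n + 1) :: real) = - of_nat i" by (auto simp: pochhammer_eq_0_iff)
      then have "n + 1 = - int i" by (metis of_int_eq_iff of_int_minus of_int_of_nat_eq)
      with \<open>i < j\<close> kj assms show False by linarith
    qed
    then show "pochhammer (0 + of_int n + 1) j \<noteq> (0::real)" by simp
    show "((\<lambda>z. pochhammer (z + of_int n + 1) j) \<longlongrightarrow> pochhammer (0 + of_int n + 1) j) (at (0::real))"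
      by (intro isCont_tendsto_compose[where g="\<lambda>z. pochhammer z j"] isCont_pochhammer) (auto intro!: tendsto_eq_intros)
    have "isCont rGamma (0 + of_int k + 1 :: real)"
      using continuous_on_rGamma[of UNIV] continuous_on_eq_continuous_at by blast
    moreover have "((\<lambda>z. z + of_int k + 1) \<longlongrightarrow> 0 + of_int k + 1) (at (0::real))"
      by (intro tendsto_intros)
    ultimately show "((\<lambda>z. rGamma (z + of_int k + 1)) \<longlongrightarrow> rGamma (0 + of_int k + 1)) (at (0::real))"
      by (rule isCont_tendsto_compose)
  qed
  also have "rGamma (0 + of_int k + 1 :: real) = 0"
  proof -
    have "(0 + of_int k + 1 :: real) = of_int (k + 1)" by simp
    moreover have "(of_int (k + 1) :: real) \<in> \<int>\<^sub>\<le>\<^sub>0" using assms by (intro nonpos_Ints_of_int) simp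
    ultimately show ?thesis by (simp add: rGamma_eq_zero_iff)
  qed
  finally show ?thesis using tendsto_cong[OF ev] by simp
qed

definition gfun :: "int \<Rightarrow> int \<Rightarrow> real \<Rightarrow> real" where
  "gfun n k = (\<lambda>z. Gamma (z + of_int n + 1) / (Gamma (z + of_int k + 1) * Gamma (z + of_int n - of_int k + 1)))"

lemma gbinom_gfun: "gbinom n k = Lim (at 0) (gfun n k)"
  unfolding gbinom_def gfun_def ..

lemma gfun_sym: "gfun n (n - k) = gfun n k"
  unfolding gfun_def by (rule ext) (simp add: mult.commute algebra_simps)

lemma gbinom_closed:
  "gbinom n k = (if 0 \<le> k then of_int n gchoose nat k
                 else if 0 \<le> n - k then of_int n gchoose nat (n - k) else 0)"
proof -
  have A: "gbinom n k' = of_int n gchoose nat k'" if "0 \<le> k'" for k'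
  proof -
    have "(gfun n k' \<longlongrightarrow> of_int n gchoose nat k') (at 0)"
      using limA[of n "nat k'"] that unfolding gfun_def by simp
    then show ?thesis unfolding gbinom_gfun by (rule tendsto_Lim[rotated]) simp
  qed
  show ?thesis
  proof (cases "0 \<le> k")
    case True then show ?thesis using A by simp
  next
    case False
    show ?thesis
    proof (cases "0 \<le> n - k")
      case True
      have "gbinom n k = gbinom n (n - k)" unfolding gbinom_gfun gfun_sym ..
      then show ?thesis using A[OF True] False True by simp
    next
      case F2: False
      have "(gfun n k \<longlongrightarrow> 0) (at 0)" using limZ[of k n] False F2 unfolding gfun_def by simp
      then have "gbinom n k = 0" unfolding gbinom_gfun by (rule tendsto_Lim[rotated]) simp
      then show ?thesis using False F2 by simp
    qed
  qed
qed



lemma prod_diff_dvd: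
  fixes f g :: "'a \<Rightarrow> int"
  assumes "finite A" "\<And>x. x \<in> A \<Longrightarrow> d dvd f x - g x"
  shows "d dvd prod f A - prod g A"
  using assms
proof (induction A rule: finite_induct)
  case empty then show ?case by simp
next
  case (insert x A)
  have "prod f (insert x A) - prod g (insert x A) = f x * (prod f A - prod g A) + (f x - g x) * prod g A"
    using insert by (simp add: algebra_simps)
  moreover have "d dvd f x * (prod f A - prod g A)" using insert by simp
  moreover have "d dvd (f x - g x) * prod g A" using insert by simp
  ultimately show ?case by simp
qed

context
  fixes P :: nat and N M :: int
  assumes NM: "N = int P * M" and P: "prime P"
begin

definition Qn :: "nat \<Rightarrow> int" where "Qn k = (\<Prod>j\<in>{j\<in>{1..k}. \<not> P dvd j}. int j)"
definition Qp :: "nat \<Rightarrow> int" where "Qp k = (\<Prod>j\<in>{j\<in>{1..k}. \<not> P dvd j}. int j - N)"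

lemma Qset_Suc: "{j\<in>{1..Suc k}. \<not> P dvd j} = (if P dvd Suc k then {j\<in>{1..k}. \<not> P dvd j} else insert (Suc k) {j\<in>{1..k}. \<not> P dvd j})"
  by (auto simp: le_Suc_eq)

lemma decomp:
  "int (fact k) = Qn k * int P ^ (k div P) * int (fact (k div P)) \<and>
   (\<Prod>j=1..k. int j - N) = Qp k * int P ^ (k div P) * (\<Prod>i=1..k div P. int i - M)"
proof (induction k)
  case 0 then show ?case by (simp add: Qn_def Qp_def)
next
  case (Suc k)
  have P1: "P > 1" using P prime_gt_1_nat by blast
  show ?case
  proof (cases "P dvd Suc k")
    case True
    have d: "Suc k div P = Suc (k div P)" using True P1 by (simp add: div_Suc dvd_eq_mod_eq_0)
    have sk: "Suc k = P * Suc (k div P)" using True d by (metis dvd_mult_div_cancel)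
    have sk': "int (Suc k) = int P * int (Suc (k div P))" using sk of_nat_mult by metis
    have Qn: "Qn (Suc k) = Qn k" and Qp: "Qp (Suc k) = Qp k" unfolding Qn_def Qp_def Qset_Suc using True by simp_all
    have "int (fact (Suc k)) = int (Suc k) * int (fact k)" by (subst fact_Suc) (simp only: of_nat_mult of_nat_id)
    also have "\<dots> = int P * int (Suc (k div P)) * (Qn k * int P ^ (k div P) * int (fact (k div P)))"
      using Suc.IH unfolding sk' by (simp only:)
    also have "\<dots> = Qn (Suc k) * int P ^ (Suc k div P) * int (fact (Suc k div P))"
      unfolding d Qn by (simp only: fact_Suc power_Suc of_nat_mult of_nat_id mult_ac)
    finally have 1: "int (fact (Suc k)) = Qn (Suc k) * int P ^ (Suc k div P) * int (fact (Suc k div P))" .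
    have "(\<Prod>j=1..Suc k. int j - N) = (int (Suc k) - N) * (\<Prod>j=1..k. int j - N)"
      by (simp add: prod.nat_ivl_Suc' mult.commute)
    also have "int (Suc k) - N = int P * (int (Suc (k div P)) - M)"
      unfolding sk' NM by (simp only: right_diff_distrib)
    also have "(\<Prod>j=1..Suc (k div P). int j - M) = (int (Suc (k div P)) - M) * (\<Prod>j=1..k div P. int j - M)"
      by (simp add: prod.nat_ivl_Suc' mult.commute)
    then have "int P * (int (Suc (k div P)) - M) * (\<Prod>j=1..k. int j - N)
        = Qp (Suc k) * int P ^ (Suc k div P) * (\<Prod>i=1..Suc k div P. int i - M)"
      using Suc.IH unfolding d Qp by (simp only: power_Suc mult_ac)
    finally show ?thesis using 1 by simp
  next
    case False
    have d: "Suc k div P = k div P" using False P1 by (simp add: div_Suc dvd_eq_mod_eq_0)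
    have fin: "finite {j\<in>{1..k}. \<not> P dvd j}" by simp
    have Qn: "Qn (Suc k) = int (Suc k) * Qn k" and Qp: "Qp (Suc k) = (int (Suc k) - N) * Qp k"
      unfolding Qn_def Qp_def Qset_Suc using False fin by simp_all
    have "(\<Prod>j=1..Suc k. int j - N) = (int (Suc k) - N) * (\<Prod>j=1..k. int j - N)"
      by (simp add: prod.nat_ivl_Suc' mult.commute)
    also have "\<dots> = Qp (Suc k) * int P ^ (Suc k div P) * (\<Prod>i=1..Suc k div P. int i - M)"
      using Suc.IH unfolding d Qp by (simp only: mult.assoc)
    finally have 2: "(\<Prod>j=1..Suc k. int j - N) = Qp (Suc k) * int P ^ (Suc k div P) * (\<Prod>i=1..Suc k div P. int i - M)" .
    have "int (fact (Suc k)) = int (Suc k) * int (fact k)" by (subst fact_Suc) (simp only: of_nat_mult of_nat_id)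
    also have "\<dots> = Qn (Suc k) * int P ^ (Suc k div P) * int (fact (Suc k div P))"
      using Suc.IH unfolding d Qn by (simp only: mult.assoc)
    finally show ?thesis using 2 by simp
  qed
qed

lemma core:
  assumes dv: "int P ^ r dvd N"
    and ha: "int (fact k) * a = (\<Prod>j=1..k. int j - N)"
    and hb: "int (fact (k div P)) * b = (\<Prod>i=1..k div P. int i - M)"
  shows "int P ^ r dvd a - b"
proof -
  define q where "q = k div P"
  have D1: "int (fact k) = Qn k * int P ^ q * int (fact q)"
   and D2: "(\<Prod>j=1..k. int j - N) = Qp k * int P ^ q * (\<Prod>i=1..q. int i - M)"
    using decomp[of k] unfolding q_def by auto
  have "(int P ^ q * int (fact q)) * (Qn k * a) = (int P ^ q * int (fact q)) * (Qp k * b)"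
  proof -
    have "(int P ^ q * int (fact q)) * (Qn k * a) = int (fact k) * a" unfolding D1 by (simp only: mult_ac)
    also have "\<dots> = Qp k * int P ^ q * (int (fact q) * b)" unfolding ha D2 hb[folded q_def] ..
    finally show ?thesis by (simp only: mult_ac)
  qed
  moreover have "int P ^ q * int (fact q) \<noteq> 0" using P by (auto simp: prime_gt_0_nat)
  ultimately have E: "Qn k * a = Qp k * b" using mult_left_cancel by blast
  have "int P ^ r dvd Qp k - Qn k"
    unfolding Qp_def Qn_def by (rule prod_diff_dvd) (use dv in auto)
  then have "int P ^ r dvd (Qp k - Qn k) * b" by simp
  also have "(Qp k - Qn k) * b = Qn k * (a - b)" using E by (simp add: algebra_simps)
  finally have 1: "int P ^ r dvd Qn k * (a - b)" .
  have Pi: "prime (int P)" using P by simp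
  have "\<not> int P dvd Qn k"
    unfolding Qn_def by (subst prime_dvd_prod_iff[OF _ Pi]) auto
  then have "coprime (int P ^ r) (Qn k)" using prime_imp_coprime[OF Pi] by simp
  with 1 show ?thesis by (simp add: coprime_dvd_mult_right_iff)
qed

end



definition intbin :: "int \<Rightarrow> nat \<Rightarrow> int" where
  "intbin n j = (if 0 \<le> n then int (nat n choose j) else (-1) ^ j * int (nat (int j - n - 1) choose j))"

lemma intbin: "(of_int n gchoose j :: real) = of_int (intbin n j)"
proof (cases "0 \<le> n")
  case True
  then have "(of_int n :: real) = of_nat (nat n)" by simp
  then show ?thesis using True by (simp add: intbin_def binomial_gbinomial)
next
  case False
  have "(of_int n gchoose j :: real) = (-1) ^ j * ((of_nat j - of_int n - 1) gchoose j)"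
    by (rule gbinomial_negated_upper)
  also have "(of_nat j - of_int n - 1 :: real) = of_nat (nat (int j - n - 1))" using False by simp
  finally show ?thesis using False by (simp add: intbin_def binomial_gbinomial)
qed

lemma fact_intbin: "int (fact j) * intbin n j = (\<Prod>i<j. n - int i)"
proof -
  have "(of_int (int (fact j) * intbin n j) :: real) = fact j * (of_int n gchoose j)"
    by (simp add: intbin)
  also have "\<dots> = (\<Prod>i=0..<j. of_int n - of_nat i)" by (simp add: gbinomial_prod_rev)
  also have "\<dots> = of_int (\<Prod>i<j. n - int i)" by (simp add: atLeast0LessThan)
  finally show ?thesis by (simp only: of_int_eq_iff)
qed

lemma prodshift: "(\<Prod>j=1..k. int j - N) = (-1) ^ k * (\<Prod>i<k. N - 1 - int i)"
proof (induction k)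
  case 0 then show ?case by simp
next
  case (Suc k)
  have "(\<Prod>j=1..Suc k. int j - N) = (int (Suc k) - N) * (\<Prod>j=1..k. int j - N)"
    by (simp add: prod.nat_ivl_Suc' mult.commute)
  also have "\<dots> = (-1) ^ Suc k * (\<Prod>i<Suc k. N - 1 - int i)"
    unfolding Suc.IH by (simp add: lessThan_Suc algebra_simps)
  finally show ?case .
qed

definition sg :: "int \<Rightarrow> int" where "sg x = (if even x then 1 else -1)"

lemma sg_nat: "sg (int j) = (-1) ^ j" by (simp add: sg_def)

lemma sg_diff: "sg (a - b) = sg a * sg b" by (auto simp: sg_def)

lemma sg_real: "(-1 :: real) ^ nat \<bar>x\<bar> = of_int (sg x)"
proof -
  have "even (nat \<bar>x\<bar>) \<longleftrightarrow> even x" by (simp add: even_nat_iff)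
  then show ?thesis by (auto simp: sg_def)
qed

lemma L_nonneg:
  fixes P :: nat and m :: int and k :: nat
  assumes P: "prime P" and r: "r \<ge> 1"
  shows "int P ^ r dvd intbin (int P ^ r * m - 1) k * sg (int k)
           - intbin (int P ^ (r - 1) * m - 1) (k div P) * sg (int (k div P))"
proof -
  define N where "N = int P ^ r * m"
  define M where "M = int P ^ (r - 1) * m"
  have NM: "N = int P * M" unfolding N_def M_def using r
    by (metis mult.assoc power_eq_if not_one_le_zero)
  have a: "int (fact k) * (intbin (N - 1) k * sg (int k)) = (\<Prod>j=1..k. int j - N)"
    unfolding prodshift sg_nat using fact_intbin[of k "N - 1"] by (simp add: mult_ac)
  have b: "int (fact (k div P)) * (intbin (M - 1) (k div P) * sg (int (k div P))) = (\<Prod>j=1..k div P. int j - M)"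
    unfolding prodshift sg_nat using fact_intbin[of "k div P" "M - 1"] by (simp add: mult_ac)
  have "int P ^ r dvd N" unfolding N_def by simp
  from core[OF NM P this a b] show ?thesis unfolding N_def M_def .
qed



lemma divkey:
  fixes p M k :: int assumes "p > 0"
  shows "(p * M - 1 - k) div p = M - 1 - k div p"
proof (rule int_div_pos_eq)
  show "p * M - 1 - k = p * (M - 1 - k div p) + (p - 1 - k mod p)"
    using div_mult_mod_eq[of k p] by (simp add: algebra_simps)
  show "0 \<le> p - 1 - k mod p" using pos_mod_bound[of p k] assms by linarith
  show "p - 1 - k mod p < p" using pos_mod_sign[of p k] assms by linarith
qed

theorem lemma5p4:
  fixes p m k :: int and r :: nat
  assumes "prime p" and "r \<ge> 1"
  shows "\<exists>t::int.
    gbinom (p ^ r * m - 1) k * (-1) ^ nat \<bar>k\<bar>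
    - gbinom (p ^ (r - 1) * m - 1) \<lfloor>real_of_int k / real_of_int p\<rfloor>
        * (-1) ^ nat \<bar>\<lfloor>real_of_int k / real_of_int p\<rfloor>\<bar>
    = real_of_int (p ^ r * t)"
proof -
  define P where "P = nat p"
  have p2: "p \<ge> 2" using assms(1) prime_ge_2_int by blast
  have pP: "p = int P" unfolding P_def using p2 by simp
  have P: "prime P" using assms(1) unfolding P_def by simp
  define n where "n = p ^ r * m - 1"
  define n' where "n' = p ^ (r - 1) * m - 1"
  define K where "K = k div p"
  have fl: "\<lfloor>real_of_int k / real_of_int p\<rfloor> = K" unfolding K_def by (rule floor_divide_of_int_eq)
  have nn': "n = p * (n' + 1) - 1" unfolding n_def n'_def using assms(2)
  proof -
    have "p ^ r = p * p ^ (r - 1)" using assms(2) by (cases r) auto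
    then show "p ^ r * m - 1 = p * (p ^ (r - 1) * m - 1 + 1) - 1" by simp
  qed
  have dk: "(n - k) div p = n' - K" unfolding nn' K_def using divkey[of p "n' + 1" k] p2 by simp
  have main: "\<exists>X Y. gbinom n k = of_int X \<and> gbinom n' K = of_int Y \<and> p ^ r dvd X * sg k - Y * sg K"
  proof (cases "0 \<le> k")
    case True
    have K0: "0 \<le> K" unfolding K_def using True p2 by (simp add: pos_imp_zdiv_nonneg_iff)
    have nK: "nat K = nat k div P" unfolding K_def P_def using True by (simp add: nat_div_distrib)
    have "gbinom n k = of_int (intbin n (nat k))" using True by (simp add: gbinom_closed intbin)
    moreover have "gbinom n' K = of_int (intbin n' (nat k div P))" using K0 nK by (simp add: gbinom_closed intbin)
    moreover have "p ^ r dvd intbin n (nat k) * sg k - intbin n' (nat k div P) * sg K"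
    proof -
      have e1: "int (nat k) = k" using True by simp
      have e2: "int (nat k div P) = K" using arg_cong[OF nK[symmetric], of int] K0 by simp
      show ?thesis using L_nonneg[OF P assms(2), of m "nat k"]
        unfolding e1 e2 n_def n'_def pP[symmetric] .
    qed
    ultimately show ?thesis by blast
  next
    case False
    have K0: "K < 0" unfolding K_def using False p2 by (simp add: pos_imp_zdiv_neg_iff)
    show ?thesis
    proof (cases "0 \<le> n - k")
      case T2: True
      define k' where "k' = nat (n - k)"
      have k'd: "nat (n' - K) = k' div P" unfolding k'_def P_def using T2 dk[symmetric] p2
        by (simp add: nat_div_distrib)
      have nK0: "0 \<le> n' - K" unfolding dk[symmetric] using T2 p2 by (simp add: pos_imp_zdiv_nonneg_iff)
      define X where "X = intbin n k'"
      define Y where "Y = intbin n' (k' div P)"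
      have G1: "gbinom n k = of_int X" using False T2 unfolding X_def k'_def by (simp add: gbinom_closed intbin)
      have G2: "gbinom n' K = of_int Y" using K0 nK0 k'd unfolding Y_def by (simp add: gbinom_closed intbin)
      have L: "p ^ r dvd X * sg (n - k) - Y * sg (n' - K)"
      proof -
        have e1: "int k' = n - k" using T2 unfolding k'_def by simp
        have e2: "int (k' div P) = n' - K" using arg_cong[OF k'd[symmetric], of int] nK0 by simp
        show ?thesis using L_nonneg[OF P assms(2), of m k']
          unfolding e1 e2 X_def Y_def pP[symmetric] n_def[symmetric] n'_def[symmetric] .
      qed
      have s1: "sg k = sg n * sg (n - k)" using sg_diff[of n "n - k"] by (simp add: sg_def)
      have s2: "sg K = sg n' * sg (n' - K)" using sg_diff[of n' "n' - K"] by (simp add: sg_def)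
      have "p ^ r dvd X * sg k - Y * sg K"
      proof (cases "sg n = sg n'")
        case True
        have "X * sg k - Y * sg K = sg n * (X * sg (n - k) - Y * sg (n' - K))"
          unfolding s1 s2 True by (simp add: algebra_simps)
        then show ?thesis using L by simp
      next
        case F: False
        have neg: "sg n' = - sg n" using F by (auto simp: sg_def split: if_splits)
        have par: "even n \<longleftrightarrow> \<not> even n'" using F by (auto simp: sg_def split: if_splits)
        have pe: "even p"
        proof (rule ccontr)
          assume "odd p"
          have "even n \<longleftrightarrow> odd (p * (n' + 1))" unfolding nn' by simp
          also have "\<dots> \<longleftrightarrow> odd (n' + 1)" using \<open>odd p\<close> by simp
          finally have "even n \<longleftrightarrow> even n'" by simp
          with par show False by simp
        qed
        have "\<not> p > 2" using prime_odd_int[OF assms(1)] pe by blast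
        then have pe2: "p = 2" using p2 by linarith
        have "odd n" unfolding nn' pe2 by simp
        with par have "even n'" by simp
        then have "odd (p ^ (r - 1) * m)" unfolding n'_def by simp
        then have "r - 1 = 0" using pe2 by (cases "r - 1") auto
        then have pr: "p ^ r = 2" using assms(2) pe2 proof -
          have "r = 1" using \<open>r - 1 = 0\<close> assms(2) by simp
          then show ?thesis using pe2 by simp
        qed
        have "X * sg k - Y * sg K = sg n * (X * sg (n - k) - Y * sg (n' - K)) + 2 * (sg n * Y * sg (n' - K))"
          unfolding s1 s2 neg by (simp add: algebra_simps)
        then show ?thesis using L pr by simp
      qed
      then show ?thesis using G1 G2 by blast
    next
      case F2: False
      have "n' - K < 0" unfolding dk[symmetric] using F2 p2 by (simp add: pos_imp_zdiv_neg_iff)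
      then have "gbinom n k = of_int 0" "gbinom n' K = of_int 0"
        using False F2 K0 by (simp_all add: gbinom_closed)
      then show ?thesis by fastforce
    qed
  qed
  then obtain X Y t where XY: "gbinom n k = of_int X" "gbinom n' K = of_int Y" and t: "X * sg k - Y * sg K = p ^ r * t"
    by (auto elim!: dvdE)
  show ?thesis
    unfolding fl sg_real n_def[symmetric] n'_def[symmetric] XY
    by (rule exI[of _ t]) (simp flip: t)
qed

end
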